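(* Let $p,\Delta>0$ be fixed integers and suppose that sequences $\{\xi_{s,t}\}_{s,t\ge0}\subseteq\mathbb{N}$ and $\{k_i\}_{i\ge0}\subseteq\mathbb{N}$ satisfy $$k_{s+t}=k_s+k_t+p-\Delta\xi_{s,t}\quad\text{for all } s,t\ge0.$$ Then $\Delta\xi_{s,0}=\Delta\xi_{0,s}=k_0+p$ for all $s\ge0$, and $$k_n=nk_1+(n-1)p-\Delta\sum_{s=1}^{n-1}\xi_{1,s}\quad(n>0),\qquad \xi_{u,v}=-\sum_{s=1}^{\min\{u,v\}-1}\xi_{1,s}+\sum_{s=\max\{u,v\}}^{u+v-1}\xi_{1,s}\quad(u,v>0).$$
   Context: $\mathbb{N}$ includes $0$. A sum $\sum_{i=a}^b$ with $b<a$ is zero. *)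

theory Defs
  imports Main
begin

end

theory Submission
  imports Defs
begin

theorem lemma2p6:
  fixes p \<Delta> :: int and \<xi> :: "nat \<Rightarrow> nat \<Rightarrow> nat" and k :: "nat \<Rightarrow> nat"
  assumes "p > 0" and "\<Delta> > 0"
    and rec: "\<And>s t. int (k (s + t)) = int (k s) + int (k t) + p - \<Delta> * int (\<xi> s t)"
  shows "(\<forall>s. \<Delta> * int (\<xi> s 0) = int (k 0) + p \<and> \<Delta> * int (\<xi> 0 s) = int (k 0) + p)
    \<and> (\<forall>n>0. int (k n) = int n * int (k 1) + (int n - 1) * p - \<Delta> * (\<Sum>s=1..n-1. int (\<xi> 1 s)))
    \<and> (\<forall>u>0. \<forall>v>0. int (\<xi> u v) = - (\<Sum>s=1..min u v - 1. int (\<xi> 1 s))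
                                   + (\<Sum>s=max u v..u+v-1. int (\<xi> 1 s)))"
proof -
  define S where "S n = (\<Sum>s=1..n. int (\<xi> 1 s))" for n
  have A: "\<forall>s. \<Delta> * int (\<xi> s 0) = int (k 0) + p \<and> \<Delta> * int (\<xi> 0 s) = int (k 0) + p"
  proof
    fix s
    have 1: "int (k s) = int (k s) + int (k 0) + p - \<Delta> * int (\<xi> s 0)" using rec[of s 0] by (metis add_0_right)
    have 2: "int (k s) = int (k 0) + int (k s) + p - \<Delta> * int (\<xi> 0 s)" using rec[of 0 s] by (metis add_0)
    show "\<Delta> * int (\<xi> s 0) = int (k 0) + p \<and> \<Delta> * int (\<xi> 0 s) = int (k 0) + p"
      using 1 2 by linarith
  qed
  have K: "int (k n) = int n * int (k 1) + (int n - 1) * p - \<Delta> * S (n-1)" if "n > 0" for n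
    using that
  proof (induction n)
    case 0 then show ?case by simp
  next
    case (Suc m)
    show ?case
    proof (cases "m = 0")
      case True then show ?thesis by (simp add: S_def)
    next
      case False
      then have IH: "int (k m) = int m * int (k 1) + (int m - 1) * p - \<Delta> * S (m-1)"
        using Suc.IH by simp
      from False obtain j where j: "m = Suc j" by (cases m) auto
      have Sm: "S m = S (m-1) + int (\<xi> 1 m)" using j by (simp add: S_def)
      have R: "int (k (Suc m)) = int (k 1) + int (k m) + p - \<Delta> * int (\<xi> 1 m)"
        using rec[of 1 m] by simp
      have "int (k (Suc m)) = int (Suc m) * int (k 1) + int m * p - \<Delta> * S m"
        unfolding R IH Sm by (simp add: algebra_simps)
      then show ?thesis by simp
    qed
  qed
  have B: "\<forall>n>0. int (k n) = int n * int (k 1) + (int n - 1) * p - \<Delta> * (\<Sum>s=1..n-1. int (\<xi> 1 s))"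
    using K unfolding S_def by blast
  have C: "int (\<xi> u v) = - S (min u v - 1) + (\<Sum>s=max u v..u+v-1. int (\<xi> 1 s))"
    if "u > 0" "v > 0" for u v
  proof -
    have split: "S (u+v-1) = S (max u v - 1) + (\<Sum>s=max u v..u+v-1. int (\<xi> 1 s))"
    proof -
      have e1: "u+v-1 = (max u v - 1) + min u v" using that by (auto simp add: min_def max_def)
      have e2: "max u v = (max u v - 1) + 1" using that by (simp add: max_def)
      have G: "S (a + b) = S a + (\<Sum>s=a+1..a+b. int (\<xi> 1 s))" for a b
      proof (induction b)
        case 0 then show ?case by simp
      next
        case (Suc b)
        have "S (a + Suc b) = S (a + b) + int (\<xi> 1 (Suc (a + b)))" by (simp add: S_def)
        moreover have "(\<Sum>s=a+1..a+Suc b. int (\<xi> 1 s)) = (\<Sum>s=a+1..a+b. int (\<xi> 1 s)) + int (\<xi> 1 (Suc (a + b)))"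
          by simp
        ultimately show ?case using Suc.IH by simp
      qed
      have "S (u+v-1) = S (max u v - 1) + (\<Sum>s=(max u v - 1)+1..(max u v - 1) + min u v. int (\<xi> 1 s))"
        unfolding e1 by (rule G)
      also have "(max u v - 1)+1 = max u v" using e2 by simp
      finally show ?thesis unfolding e1[symmetric] .
    qed
    have ku: "int (k u) = int u * int (k 1) + (int u - 1) * p - \<Delta> * S (u-1)" using K that by blast
    have kv: "int (k v) = int v * int (k 1) + (int v - 1) * p - \<Delta> * S (v-1)" using K that by blast
    have kuv: "int (k (u+v)) = int (u+v) * int (k 1) + (int (u+v) - 1) * p - \<Delta> * S (u+v-1)"
      using K[of "u+v"] that by simp
    have eq1: "\<Delta> * int (\<xi> u v) = int (k u) + int (k v) + p - int (k (u+v))" using rec[of u v] by linarith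
    have eq2: "int (k u) + int (k v) + p - int (k (u+v)) = \<Delta> * (S (u+v-1) - S (u-1) - S (v-1))"
      unfolding ku kv kuv of_nat_add by (simp add: algebra_simps)
    have sy: "S (u-1) + S (v-1) = S (min u v - 1) + S (max u v - 1)"
      by (cases "u \<le> v") (auto simp: min_def max_def)
    have eq3: "S (u+v-1) - S (u-1) - S (v-1) = - S (min u v - 1) + (\<Sum>s=max u v..u+v-1. int (\<xi> 1 s))"
      using split sy by linarith
    have "\<Delta> * int (\<xi> u v) = \<Delta> * (- S (min u v - 1) + (\<Sum>s=max u v..u+v-1. int (\<xi> 1 s)))"
      using eq1 eq2 eq3 by simp
    then show ?thesis using \<open>\<Delta> > 0\<close> by simp
  qed
  show ?thesis using A B C unfolding S_def by blast
qed

end
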